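(* Let $\theta>0$ and $\ell\in[m]$. Consider an instance of stochastic $\mathrm{Top}_\ell$-norm load balancing on $m$ identical machines with independent nonnegative job random variables $\{X_j\}_{j\in J}$, where for each job $j$ the distribution of $X_j$ is supported on $\{0\}\cup[\theta,\infty)$, i.e. $\Pr[0<X_j<\theta]=0$. (i) If $\sum_{j\in J}\mathbb{E}[X_j]\le\ell\theta$, then for any assignment $\sigma$, $\mathbb{E}[\mathrm{Top}_\ell(\mathcal{L}^\sigma)]\le2\ell\theta$. (ii) If $\sum_{j\in J}\mathbb{E}[X_j]>\ell\theta$, then for any assignment $\sigma$, $\mathbb{E}[\mathrm{Top}_\ell(\mathcal{L}^\sigma)]>\ell\theta/2$.
   Context: An assignment $\sigma:J\to[m]$ induces the random load vector $\mathcal{L}^\sigma$ with $\mathcal{L}^\sigma_i=\sum_{j:\sigma(j)=i}X_j$. For $x\in\mathbb{R}^m_{\ge0}$, $\mathrm{Top}_\ell(x)$ is the sum of the $\ell$ largest coordinates of $x$. *)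

theory Defs
  imports "HOL-Probability.Probability"
begin

text \<open>Machines are indexed by 0..<m. Load of machine i under assignment sigma at outcome w.\<close>
definition load :: "('j \<Rightarrow> 'w \<Rightarrow> real) \<Rightarrow> 'j set \<Rightarrow> ('j \<Rightarrow> nat) \<Rightarrow> 'w \<Rightarrow> nat \<Rightarrow> real" where
  "load X J \<sigma> w i = (\<Sum>j\<in>{j\<in>J. \<sigma> j = i}. X j w)"

definition top_sum :: "nat \<Rightarrow> nat \<Rightarrow> (nat \<Rightarrow> real) \<Rightarrow> real" where
  "top_sum l m x = sum_list (take l (rev (sort (map x [0..<m]))))"

end

theory Submission
  imports Defs
begin


lemma take_sum_ge:
  fixes ys :: "real list"
  assumes "sorted_wrt (\<ge>) ys" "\<forall>y\<in>set ys. y \<ge> 0" "A \<subseteq># mset ys" "size A \<le> l"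
  shows "sum_mset A \<le> sum_list (take l ys)"
  using assms
proof (induction ys arbitrary: A l)
  case Nil
  then show ?case by simp
next
  case (Cons y ys)
  show ?case
  proof (cases l)
    case 0
    then show ?thesis using Cons.prems by simp
  next
    case (Suc l')
    show ?thesis
    proof (cases "y \<in># A")
      case True
      have "A - {#y#} \<subseteq># mset ys" using Cons.prems(3) True
        using subset_eq_diff_conv[of A "{#y#}" "mset ys"] by simp
      moreover have "size (A - {#y#}) \<le> l'" using Cons.prems(4) True Suc
        by (simp add: size_Diff_singleton)
      ultimately have "sum_mset (A - {#y#}) \<le> sum_list (take l' ys)"
        using Cons.IH Cons.prems(1,2) by simp
      moreover have "sum_mset A = y + sum_mset (A - {#y#})" using True
        using sum_mset.remove by blast
      ultimately show ?thesis using Suc by simp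
    next
      case False
      have sub: "A \<subseteq># mset ys" using Cons.prems(3) False
        using subset_eq_diff_conv[of A "{#y#}" "mset ys"] diff_single_trivial[of y A] by simp
      show ?thesis
      proof (cases "A = {#}")
        case True
        have "\<forall>z\<in>set (take l (y#ys)). z \<ge> 0" using Cons.prems(2) by (metis in_mono set_take_subset)
        then have "sum_list (take l (y # ys)) \<ge> 0" by (auto intro: sum_list_nonneg)
        then show ?thesis using True by simp
      next
        case False
        then obtain a where a: "a \<in># A" by (meson multiset_nonemptyE)
        have "a \<in> set ys" using a sub using mset_subset_eqD by fastforce
        then have "a \<le> y" using Cons.prems(1) by simp
        have "A - {#a#} \<subseteq># mset ys" using sub
          using subset_mset.order_trans[OF diff_subset_eq_self] by blast
        moreover have "size (A - {#a#}) \<le> l'" using Cons.prems(4) a Suc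
          by (simp add: size_Diff_singleton)
        ultimately have "sum_mset (A - {#a#}) \<le> sum_list (take l' ys)"
          using Cons.IH Cons.prems(1,2) by simp
        moreover have "sum_mset A = a + sum_mset (A - {#a#})" using a
          using sum_mset.remove by blast
        ultimately show ?thesis using Suc \<open>a \<le> y\<close> by simp
      qed
    qed
  qed
qed

lemma top_sum_ge:
  assumes "\<forall>i<m. x i \<ge> 0" "S \<subseteq> {..<m}" "card S \<le> l"
  shows "(\<Sum>i\<in>S. x i) \<le> top_sum l m x"
proof -
  let ?ys = "rev (sort (map x [0..<m]))"
  have fin: "finite S" using assms(2) finite_subset by blast
  have "sorted_wrt (\<ge>) ?ys" by (simp add: sorted_wrt_rev)
  moreover have "\<forall>y\<in>set ?ys. y \<ge> 0" using assms(1) by auto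
  moreover have "image_mset x (mset_set S) \<subseteq># mset ?ys"
  proof -
    have "mset ?ys = image_mset x (mset_set {..<m})"
      by (simp add: mset_set_upto_eq_mset_upto)
    moreover have "mset_set S \<subseteq># mset_set {..<m}"
      using assms(2) by (simp add: subset_imp_msubset_mset_set)
    ultimately show ?thesis by (simp add: image_mset_subseteq_mono)
  qed
  moreover have "size (image_mset x (mset_set S)) \<le> l" using assms(3) by simp
  ultimately have "sum_mset (image_mset x (mset_set S)) \<le> sum_list (take l ?ys)"
    by (rule take_sum_ge)
  then show ?thesis by (simp add: top_sum_def sum_unfold_sum_mset[of x S, symmetric])
qed

lemma top_sum_nonneg:
  assumes "\<forall>i<m. x i \<ge> 0"
  shows "0 \<le> top_sum l m x"
  using top_sum_ge[OF assms, of "{}" l] by simp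

lemma top_sum_le:
  assumes "\<forall>i<m. x i \<ge> 0"
  shows "top_sum l m x \<le> (\<Sum>i<m. x i)"
proof -
  let ?ys = "rev (sort (map x [0..<m]))"
  have nn: "\<forall>y\<in>set ?ys. y \<ge> 0" using assms by auto
  have "\<forall>y\<in>set (drop l ?ys). y \<ge> 0" using nn by (metis in_mono set_drop_subset)
  then have "sum_list (drop l ?ys) \<ge> 0" by (auto intro: sum_list_nonneg)
  then have "sum_list (take l ?ys) \<le> sum_list (take l ?ys) + sum_list (drop l ?ys)"
    by linarith
  also have "\<dots> = sum_list ?ys" by (metis append_take_drop_id sum_list_append)
  also have "\<dots> = sum_mset (mset ?ys)" by (rule sum_mset_sum_list[symmetric])
  also have "\<dots> = sum_mset (mset (map x [0..<m]))" by (simp only: mset_rev mset_sort)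
  also have "\<dots> = sum_list (map x [0..<m])" by (rule sum_mset_sum_list)
  also have "\<dots> = (\<Sum>i<m. x i)"
    by (metis atLeast_upt sum_set_upt_conv_sum_list_nat)
  finally show ?thesis by (simp add: top_sum_def)
qed


lemma load_nonneg:
  assumes "\<forall>j\<in>J. X j w \<ge> 0"
  shows "load X J \<sigma> w i \<ge> 0"
  unfolding load_def using assms by (intro sum_nonneg) auto

lemma load_sum_P:
  assumes "finite J" "finite P" "\<forall>j\<in>J. X j w \<noteq> 0 \<longrightarrow> \<sigma> j \<in> P"
  shows "(\<Sum>i\<in>P. load X J \<sigma> w i) = (\<Sum>j\<in>J. X j w)"
proof -
  let ?J' = "{j\<in>J. \<sigma> j \<in> P}"
  have "(\<Sum>i\<in>P. load X J \<sigma> w i) = (\<Sum>i\<in>P. \<Sum>j\<in>{j\<in>?J'. \<sigma> j = i}. X j w)"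
    unfolding load_def by (intro sum.cong refl arg_cong2[where f=sum]) auto
  also have "\<dots> = (\<Sum>j\<in>?J'. X j w)"
    using assms by (intro sum.group) auto
  also have "\<dots> = (\<Sum>j\<in>J. X j w)"
    using assms by (intro sum.mono_neutral_left) auto
  finally show ?thesis .
qed

lemma point_A:
  assumes fin: "finite J" and sig: "\<forall>j\<in>J. \<sigma> j < m"
    and nn: "\<forall>j\<in>J. X j w \<ge> 0" and gap: "\<forall>j\<in>J. X j w = 0 \<or> \<theta> \<le> X j w"
    and N: "l \<le> card {j\<in>J. X j w \<noteq> 0}" and th: "\<theta> > 0"
  shows "real l * \<theta> \<le> top_sum l m (load X J \<sigma> w)"
proof -
  let ?nz = "{j\<in>J. X j w \<noteq> 0}"
  let ?P = "\<sigma> ` ?nz"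
  have lnn: "\<forall>i<m. load X J \<sigma> w i \<ge> 0" using load_nonneg[of J X w \<sigma>] nn by blast
  have Psub: "?P \<subseteq> {..<m}" using sig by auto
  have finP: "finite ?P" using fin by auto
  show ?thesis
  proof (cases "l \<le> card ?P")
    case True
    then obtain S where S: "S \<subseteq> ?P" "card S = l" "finite S" by (rule obtain_subset_with_card_n)
    have "\<forall>i\<in>S. \<theta> \<le> load X J \<sigma> w i"
    proof
      fix i assume "i \<in> S"
      then obtain j where j: "j \<in> J" "X j w \<noteq> 0" "\<sigma> j = i" using S by auto
      have "\<theta> \<le> X j w" using gap j by auto
      also have "X j w \<le> load X J \<sigma> w i" unfolding load_def
        using j fin nn by (intro member_le_sum) auto
      finally show "\<theta> \<le> load X J \<sigma> w i" .
    qed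
    then have "real (card S) * \<theta> \<le> (\<Sum>i\<in>S. load X J \<sigma> w i)"
      by (intro sum_bounded_below) auto
    also have "\<dots> \<le> top_sum l m (load X J \<sigma> w)"
      using S Psub by (intro top_sum_ge lnn) auto
    finally show ?thesis using S by simp
  next
    case False
    have "real l * \<theta> \<le> real (card ?nz) * \<theta>" using N th by simp
    also have "\<dots> \<le> (\<Sum>j\<in>?nz. X j w)"
      using gap by (intro sum_bounded_below) auto
    also have "\<dots> \<le> (\<Sum>j\<in>J. X j w)"
      using fin nn by (intro sum_mono2) auto
    also have "\<dots> = (\<Sum>i\<in>?P. load X J \<sigma> w i)"
      using fin finP by (intro load_sum_P[symmetric]) auto
    also have "\<dots> \<le> top_sum l m (load X J \<sigma> w)"
      using False Psub by (intro top_sum_ge lnn) auto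
    finally show ?thesis .
  qed
qed

lemma point_B:
  assumes fin: "finite J" and sig: "\<forall>j\<in>J. \<sigma> j < m"
    and nn: "\<forall>j\<in>J. X j w \<ge> 0"
  shows "(\<Sum>j\<in>J. max 0 (X j w) * (if card {k\<in>J-{j}. X k w \<noteq> 0} < l then 1 else 0))
           \<le> top_sum l m (load X J \<sigma> w)"
proof -
  let ?nz = "{j\<in>J. X j w \<noteq> 0}"
  let ?P = "\<sigma> ` ?nz"
  have lnn: "\<forall>i<m. load X J \<sigma> w i \<ge> 0" using load_nonneg[of J X w \<sigma>] nn by blast
  have Psub: "?P \<subseteq> {..<m}" using sig by auto
  have finP: "finite ?P" using fin by auto
  show ?thesis
  proof (cases "card ?nz \<le> l")
    case True
    have "(\<Sum>j\<in>J. max 0 (X j w) * (if card {k\<in>J-{j}. X k w \<noteq> 0} < l then 1 else 0))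
        \<le> (\<Sum>j\<in>J. X j w)"
      using nn by (intro sum_mono) auto
    also have "\<dots> = (\<Sum>i\<in>?P. load X J \<sigma> w i)"
      using fin finP by (intro load_sum_P[symmetric]) auto
    also have "\<dots> \<le> top_sum l m (load X J \<sigma> w)"
      using True Psub card_image_le[of ?nz \<sigma>] fin by (intro top_sum_ge lnn) auto
    finally show ?thesis .
  next
    case False
    have "\<forall>j\<in>J. max 0 (X j w) * (if card {k\<in>J-{j}. X k w \<noteq> 0} < l then 1 else 0) = 0"
    proof
      fix j assume j: "j \<in> J"
      show "max 0 (X j w) * (if card {k\<in>J-{j}. X k w \<noteq> 0} < l then 1 else 0) = 0"
      proof (cases "X j w = 0")
        case True then show ?thesis by simp
      next
        case False
        have "{k\<in>J-{j}. X k w \<noteq> 0} = ?nz - {j}" by auto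
        then have "card {k\<in>J-{j}. X k w \<noteq> 0} = card ?nz - 1"
          using j False fin by simp
        then show ?thesis using \<open>\<not> card ?nz \<le> l\<close> by simp
      qed
    qed
    then have "(\<Sum>j\<in>J. max 0 (X j w) * (if card {k\<in>J-{j}. X k w \<noteq> 0} < l then 1 else 0)) = 0"
      by (intro sum.neutral) blast
    then show ?thesis using top_sum_nonneg[OF lnn] by simp
  qed
qed

lemma point_le:
  assumes fin: "finite J" and sig: "\<forall>j\<in>J. \<sigma> j < m"
    and nn: "\<forall>j\<in>J. X j w \<ge> 0"
  shows "top_sum l m (load X J \<sigma> w) \<le> (\<Sum>j\<in>J. X j w)"
proof -
  have lnn: "\<forall>i<m. load X J \<sigma> w i \<ge> 0" using load_nonneg[of J X w \<sigma>] nn by blast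
  have "top_sum l m (load X J \<sigma> w) \<le> (\<Sum>i<m. load X J \<sigma> w i)" by (rule top_sum_le[OF lnn])
  also have "\<dots> = (\<Sum>j\<in>J. X j w)" using fin sig by (intro load_sum_P) auto
  finally show ?thesis .
qed


lemma cnt_card:
  assumes "finite B"
  shows "(\<Sum>k\<in>B. if X k w = 0 then 0 else 1::real) = real (card {k\<in>B. X k w \<noteq> 0})"
proof -
  have "(\<Sum>k\<in>B. if X k w = 0 then 0 else 1::real) = (\<Sum>k\<in>{k\<in>B. X k w \<noteq> 0}. 1)"
    using assms by (subst sum.inter_filter) (auto intro!: sum.cong)
  then show ?thesis by simp
qed

lemma (in prob_space) indep_prod:
  assumes ind: "indep_vars (\<lambda>_. borel) X J" and j: "j \<in> J" and fin: "finite J"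
  shows "(\<integral>\<^sup>+ w. ennreal (max 0 (X j w) * (if (\<Sum>k\<in>J-{j}. if X k w = 0 then 0 else 1::real) < c then 1 else 0)) \<partial>M)
    = (\<integral>\<^sup>+ w. ennreal (max 0 (X j w)) \<partial>M) *
      (\<integral>\<^sup>+ w. ennreal (if (\<Sum>k\<in>J-{j}. if X k w = 0 then 0 else 1::real) < c then 1 else 0) \<partial>M)"
proof -
  let ?A = "{j}" and ?B = "J - {j}"
  have iv: "indep_var (PiM ?A (\<lambda>_. borel :: real measure)) (\<lambda>\<omega>. restrict (\<lambda>i. X i \<omega>) ?A)
                      (PiM ?B (\<lambda>_. borel :: real measure)) (\<lambda>\<omega>. restrict (\<lambda>i. X i \<omega>) ?B)"
    using j by (intro indep_var_restrict[OF ind]) auto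
  define g1 where "g1 = (\<lambda>f. max 0 (f j) :: real)"
  define g2 where
    "g2 = (\<lambda>f. if (\<Sum>k\<in>?B. if f k = (0::real) then 0 else 1::real) < c then 1 else (0::real))"
  have m1: "g1 \<in> borel_measurable (PiM ?A (\<lambda>_. borel :: real measure))"
    unfolding g1_def by measurable
  have "(\<lambda>f. \<Sum>k\<in>?B. if f k = 0 then 0 else 1::real) \<in> borel_measurable (PiM ?B (\<lambda>_. borel :: real measure))"
  proof (rule borel_measurable_sum)
    fix k assume "k \<in> ?B"
    then have [measurable]: "(\<lambda>f. f k) \<in> borel_measurable (PiM ?B (\<lambda>_. borel :: real measure))"
      by (rule measurable_component_singleton)
    show "(\<lambda>f. if f k = 0 then 0 else 1::real) \<in> borel_measurable (PiM ?B (\<lambda>_. borel :: real measure))"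
      by measurable
  qed
  then have m2: "g2 \<in> borel_measurable (PiM ?B (\<lambda>_. borel :: real measure))"
    unfolding g2_def by measurable
  have iv2: "indep_var borel (g1 \<circ> (\<lambda>\<omega>. restrict (\<lambda>i. X i \<omega>) ?A)) borel (g2 \<circ> (\<lambda>\<omega>. restrict (\<lambda>i. X i \<omega>) ?B))"
    by (rule indep_var_compose[OF iv m1 m2])
  define Z1 where "Z1 w = max 0 (X j w)" for w
  define Z2 where "Z2 w = (if (\<Sum>k\<in>J-{j}. if X k w = 0 then 0 else 1::real) < c then 1 else (0::real))" for w
  have e1: "g1 \<circ> (\<lambda>\<omega>. restrict (\<lambda>i. X i \<omega>) ?A) = Z1"
    by (simp add: fun_eq_iff g1_def Z1_def)
  have e2: "g2 \<circ> (\<lambda>\<omega>. restrict (\<lambda>i. X i \<omega>) ?B) = Z2"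
  proof
    fix w
    have "(\<Sum>k\<in>?B. if restrict (\<lambda>i. X i w) ?B k = 0 then 0 else 1::real) = (\<Sum>k\<in>?B. if X k w = 0 then 0 else 1::real)"
      by (intro sum.cong) auto
    then show "(g2 \<circ> (\<lambda>\<omega>. restrict (\<lambda>i. X i \<omega>) ?B)) w = Z2 w"
      by (simp add: g2_def Z2_def)
  qed
  have iv3: "indep_vars (\<lambda>_. borel :: real measure) (case_bool Z1 Z2) UNIV"
  proof -
    have "indep_vars (case_bool borel borel) (case_bool Z1 Z2) UNIV"
      using iv2 unfolding e1 e2 indep_var_def .
    moreover have "case_bool borel borel = (\<lambda>_::bool. borel :: real measure)"
      by (simp add: fun_eq_iff split: bool.split)
    ultimately show ?thesis by simp
  qed
  have iv4: "indep_vars (\<lambda>_. borel) (\<lambda>i \<omega>. ennreal (case_bool Z1 Z2 i \<omega>)) UNIV"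
    by (rule indep_vars_compose2[OF iv3]) measurable
  have "(\<integral>\<^sup>+\<omega>. (\<Prod>i\<in>UNIV. ennreal (case_bool Z1 Z2 i \<omega>)) \<partial>M) = (\<Prod>i\<in>UNIV. \<integral>\<^sup>+\<omega>. ennreal (case_bool Z1 Z2 i \<omega>) \<partial>M)"
    by (rule indep_vars_nn_integral[OF _ iv4]) auto
  then show ?thesis by (simp add: UNIV_bool Z1_def Z2_def mult.commute ennreal_mult')
qed



theorem lemma11:
  fixes M :: "'w measure" and X :: "'j \<Rightarrow> 'w \<Rightarrow> real" and J :: "'j set"
    and \<sigma> :: "'j \<Rightarrow> nat" and m l :: nat and \<theta> :: real
  assumes "prob_space M"
    and "\<theta> > 0"
    and "l \<in> {1..m}"
    and "finite J"
    and "prob_space.indep_vars M (\<lambda>_. borel) X J"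
    and "\<forall>j\<in>J. AE w in M. X j w \<ge> 0"
    and "\<forall>j\<in>J. AE w in M. \<not> (0 < X j w \<and> X j w < \<theta>)"
    and "\<forall>j\<in>J. \<sigma> j < m"
  shows "((\<Sum>j\<in>J. \<integral>\<^sup>+ w. ennreal (X j w) \<partial>M) \<le> ennreal (real l * \<theta>) \<longrightarrow>
           (\<integral>\<^sup>+ w. ennreal (top_sum l m (load X J \<sigma> w)) \<partial>M) \<le> ennreal (2 * real l * \<theta>))
       \<and> ((\<Sum>j\<in>J. \<integral>\<^sup>+ w. ennreal (X j w) \<partial>M) > ennreal (real l * \<theta>) \<longrightarrow>
           (\<integral>\<^sup>+ w. ennreal (top_sum l m (load X J \<sigma> w)) \<partial>M) > ennreal (real l * \<theta> / 2))"
proof -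
  interpret prob_space M by fact
  note th = assms(2) and fin = assms(4) and ind = assms(5) and sig = assms(8)
  have l1: "l \<ge> 1" using assms(3) by simp
  have Xm: "X j \<in> borel_measurable M" if "j \<in> J" for j
    using ind that unfolding indep_vars_def by auto
  have AEw: "AE w in M. \<forall>j\<in>J. X j w \<ge> 0 \<and> (X j w = 0 \<or> \<theta> \<le> X j w)"
  proof -
    have "\<forall>j\<in>J. AE w in M. X j w \<ge> 0 \<and> (X j w = 0 \<or> \<theta> \<le> X j w)"
    proof
      fix j assume "j \<in> J"
      then have "AE w in M. X j w \<ge> 0" "AE w in M. \<not> (0 < X j w \<and> X j w < \<theta>)"
        using assms(6,7) by auto
      then show "AE w in M. X j w \<ge> 0 \<and> (X j w = 0 \<or> \<theta> \<le> X j w)"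
        by eventually_elim auto
    qed
    then show ?thesis using fin by (simp add: eventually_ball_finite)
  qed
  let ?T = "\<lambda>w. top_sum l m (load X J \<sigma> w)"
  let ?S = "\<Sum>j\<in>J. \<integral>\<^sup>+ w. ennreal (X j w) \<partial>M"
  have EX: "(\<integral>\<^sup>+ w. ennreal (max 0 (X j w)) \<partial>M) = (\<integral>\<^sup>+ w. ennreal (X j w) \<partial>M)" for j
    by (intro nn_integral_cong) (simp add: max_def ennreal_neg)
  have part1: "(\<integral>\<^sup>+ w. ennreal (?T w) \<partial>M) \<le> ?S"
  proof -
    have "(\<integral>\<^sup>+ w. ennreal (?T w) \<partial>M) \<le> (\<integral>\<^sup>+ w. (\<Sum>j\<in>J. ennreal (max 0 (X j w))) \<partial>M)"
    proof (rule nn_integral_mono_AE)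
      show "AE w in M. ennreal (?T w) \<le> (\<Sum>j\<in>J. ennreal (max 0 (X j w)))"
        using AEw
      proof eventually_elim
        case (elim w)
        have "\<forall>j\<in>J. X j w \<ge> 0" using elim by auto
        then have "?T w \<le> (\<Sum>j\<in>J. X j w)" using point_le[of J \<sigma> m X w l] fin sig by blast
        also have "\<dots> = (\<Sum>j\<in>J. max 0 (X j w))" using elim by (intro sum.cong) auto
        finally have "ennreal (?T w) \<le> ennreal (\<Sum>j\<in>J. max 0 (X j w))" by (rule ennreal_leI)
        also have "\<dots> = (\<Sum>j\<in>J. ennreal (max 0 (X j w)))" by (rule sum_ennreal[symmetric]) auto
        finally show ?case .
      qed
    qed
    also have "\<dots> = (\<Sum>j\<in>J. \<integral>\<^sup>+ w. ennreal (max 0 (X j w)) \<partial>M)"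
      using Xm by (intro nn_integral_sum) auto
    also have "\<dots> = ?S" using EX by simp
    finally show ?thesis .
  qed
  define cnt where "cnt B w = (\<Sum>k\<in>B. if X k w = 0 then 0 else 1::real)" for B w
  have cntm: "cnt B \<in> borel_measurable M" if "B \<subseteq> J" for B
    unfolding cnt_def
  proof (rule borel_measurable_sum)
    fix k assume "k \<in> B"
    then have [measurable]: "X k \<in> borel_measurable M" using Xm that by auto
    show "(\<lambda>w. if X k w = 0 then 0 else 1::real) \<in> borel_measurable M" by measurable
  qed
  define G where "G = {w\<in>space M. cnt J w < real l}"
  define E where "E j = {w\<in>space M. cnt (J-{j}) w < real l}" for j
  have Gm: "G \<in> sets M" unfolding G_def using cntm[of J] by measurable
  have Em: "E j \<in> sets M" for j unfolding E_def using cntm[of "J-{j}"] by measurable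
  have GE: "G \<subseteq> E j" if "j \<in> J" for j
  proof
    fix w assume "w \<in> G"
    moreover have "cnt (J-{j}) w \<le> cnt J w" unfolding cnt_def using fin
      by (intro sum_mono2) auto
    ultimately show "w \<in> E j" unfolding G_def E_def by auto
  qed
  define p where "p = prob G"
  have eG: "emeasure M G = ennreal p" unfolding p_def by (simp add: emeasure_eq_measure)
  have eG': "emeasure M (space M - G) = ennreal (1 - p)"
    unfolding p_def using Gm by (simp add: emeasure_eq_measure prob_compl)
  have boundA: "ennreal (real l * \<theta>) * ennreal (1 - p) \<le> (\<integral>\<^sup>+ w. ennreal (?T w) \<partial>M)"
  proof -
    have "ennreal (real l * \<theta>) * ennreal (1 - p) = (\<integral>\<^sup>+ w. ennreal (real l * \<theta>) * indicator (space M - G) w \<partial>M)"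
      using Gm eG' by (simp add: nn_integral_cmult_indicator)
    also have "\<dots> \<le> (\<integral>\<^sup>+ w. ennreal (?T w) \<partial>M)"
    proof (rule nn_integral_mono_AE)
      show "AE w in M. ennreal (real l * \<theta>) * indicator (space M - G) w \<le> ennreal (?T w)"
        using AEw
      proof eventually_elim
        case (elim w)
        show ?case
        proof (cases "w \<in> space M - G")
          case True
          then have "\<not> cnt J w < real l" unfolding G_def by auto
          moreover have "cnt J w = real (card {j\<in>J. X j w \<noteq> 0})" unfolding cnt_def by (rule cnt_card[OF fin])
          ultimately have lc: "l \<le> card {j\<in>J. X j w \<noteq> 0}" by simp
          have nw: "\<forall>j\<in>J. X j w \<ge> 0" and gw: "\<forall>j\<in>J. X j w = 0 \<or> \<theta> \<le> X j w" using elim by auto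
          have "real l * \<theta> \<le> ?T w" using point_A[of J \<sigma> m X w \<theta> l] fin sig nw gw lc th by blast
          then show ?thesis using True by (simp add: ennreal_leI)
        next
          case False then show ?thesis by simp
        qed
      qed
    qed
    finally show ?thesis .
  qed
  have boundB: "?S * ennreal p \<le> (\<integral>\<^sup>+ w. ennreal (?T w) \<partial>M)"
  proof -
    let ?Z = "\<lambda>j w. (if cnt (J-{j}) w < real l then 1 else 0::real)"
    have "?S * ennreal p = (\<Sum>j\<in>J. (\<integral>\<^sup>+ w. ennreal (X j w) \<partial>M) * emeasure M G)"
      using eG by (simp add: sum_distrib_right)
    also have "\<dots> \<le> (\<Sum>j\<in>J. (\<integral>\<^sup>+ w. ennreal (max 0 (X j w)) \<partial>M) * (\<integral>\<^sup>+ w. ennreal (?Z j w) \<partial>M))"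
    proof (intro sum_mono mult_mono)
      fix j assume j: "j \<in> J"
      have "(\<integral>\<^sup>+ w. ennreal (?Z j w) \<partial>M) = (\<integral>\<^sup>+ w. indicator (E j) w \<partial>M)"
        by (intro nn_integral_cong) (auto simp: E_def indicator_def)
      also have "\<dots> = emeasure M (E j)" using Em by simp
      finally show "emeasure M G \<le> (\<integral>\<^sup>+ w. ennreal (?Z j w) \<partial>M)"
        using GE[OF j] Em by (simp add: emeasure_mono)
    qed (auto simp: EX)
    also have "\<dots> = (\<Sum>j\<in>J. \<integral>\<^sup>+ w. ennreal (max 0 (X j w) * ?Z j w) \<partial>M)"
      using indep_prod[OF ind _ fin] unfolding cnt_def by simp
    also have "\<dots> = (\<integral>\<^sup>+ w. (\<Sum>j\<in>J. ennreal (max 0 (X j w) * ?Z j w)) \<partial>M)"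
    proof (rule nn_integral_sum[symmetric])
      fix j assume "j \<in> J"
      then have [measurable]: "X j \<in> borel_measurable M" "cnt (J-{j}) \<in> borel_measurable M"
        using Xm cntm by auto
      show "(\<lambda>w. ennreal (max 0 (X j w) * ?Z j w)) \<in> borel_measurable M" by measurable
    qed
    also have "\<dots> \<le> (\<integral>\<^sup>+ w. ennreal (?T w) \<partial>M)"
    proof (rule nn_integral_mono_AE)
      show "AE w in M. (\<Sum>j\<in>J. ennreal (max 0 (X j w) * ?Z j w)) \<le> ennreal (?T w)"
        using AEw
      proof eventually_elim
        case (elim w)
        have "(\<Sum>j\<in>J. ennreal (max 0 (X j w) * ?Z j w)) = ennreal (\<Sum>j\<in>J. max 0 (X j w) * ?Z j w)"
          by (intro sum_ennreal) auto
        also have "(\<Sum>j\<in>J. max 0 (X j w) * ?Z j w) =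
             (\<Sum>j\<in>J. max 0 (X j w) * (if card {k\<in>J-{j}. X k w \<noteq> 0} < l then 1 else 0))"
          using fin by (intro sum.cong) (auto simp: cnt_def cnt_card)
        also have "\<dots> \<le> ?T w" using elim by (intro point_B[OF fin sig]) auto
        finally show ?case by (simp add: ennreal_leI)
      qed
    qed
    finally show ?thesis .
  qed
  have ltp: "0 < real l * \<theta>" using l1 th by simp
  show ?thesis
  proof (intro conjI impI)
    assume "?S \<le> ennreal (real l * \<theta>)"
    moreover have "ennreal (real l * \<theta>) \<le> ennreal (2 * real l * \<theta>)" using ltp by (intro ennreal_leI) (simp add: mult.commute)
    ultimately show "(\<integral>\<^sup>+ w. ennreal (?T w) \<partial>M) \<le> ennreal (2 * real l * \<theta>)"
      using part1 by (meson order_trans)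
  next
    assume S: "?S > ennreal (real l * \<theta>)"
    show "(\<integral>\<^sup>+ w. ennreal (?T w) \<partial>M) > ennreal (real l * \<theta> / 2)"
    proof (cases "p \<ge> 1/2")
      case True
      have "ennreal (real l * \<theta> / 2) = ennreal (real l * \<theta> * (1/2))" by simp
      also have "\<dots> = ennreal (real l * \<theta>) * ennreal (1/2)"
        using ltp by (intro ennreal_mult) auto
      also have "\<dots> < ?S * ennreal (1/2)"
      proof -
        have h1: "0 < ennreal (1/2)" by (simp only: ennreal_less_zero_iff)
        have h2: "ennreal (1/2) < top" by (rule ennreal_less_top)
        show ?thesis by (rule ennreal_mult_strict_right_mono[OF S h1 h2])
      qed
      also have "\<dots> \<le> ?S * ennreal p" using True by (intro mult_left_mono ennreal_leI) auto
      also have "\<dots> \<le> (\<integral>\<^sup>+ w. ennreal (?T w) \<partial>M)" by (rule boundB)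
      finally show ?thesis .
    next
      case False
      have "p \<le> 1" unfolding p_def by simp
      have "ennreal (real l * \<theta> / 2) < ennreal (real l * \<theta> * (1 - p))"
      proof -
        have r: "real l * \<theta> * (1/2) < real l * \<theta> * (1 - p)"
          using False ltp by (intro mult_strict_left_mono) auto
        then have "real l * \<theta> / 2 < real l * \<theta> * (1 - p)" by simp
        then show ?thesis using ltp by (subst ennreal_less_iff) auto
      qed
      also have "\<dots> = ennreal (real l * \<theta>) * ennreal (1 - p)"
        using ltp \<open>p \<le> 1\<close> by (simp add: ennreal_mult)
      also have "\<dots> \<le> (\<integral>\<^sup>+ w. ennreal (?T w) \<partial>M)" by (rule boundA)
      finally show ?thesis .
    qed
  qed
qed
end
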